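(* Let $f\colon\mathbb{R}^d\to\mathbb{R}\cup\{\infty\}$ be a lower semicontinuous convex function, let $Q\subseteq\mathbb{R}^d$ be a nonempty closed convex set contained in the domain of $f$, and assume the set $X^*$ of minimizers of $f$ over $Q$ is nonempty, with minimum value $f^*$. Let $g(x;\xi)$ be a stochastic subgradient oracle, i.e. $\mathbb{E}_{\xi\sim D}\,g(x;\xi)\in\partial f(x)$ for all $x\in Q$, and suppose there are constants $L_0,L_1\ge 0$ with $$\mathbb{E}_{\xi}\|g(x;\xi)\|^2\le L_0^2+L_1(f(x)-f^* )\qquad\text{for all }x\in Q.$$ Fix $x^*\in X^*$, $x_0\in Q$, and consider the iteration $x_{k+1}=P_Q(x_k-\alpha_k g(x_k;\xi_k))$ with $\xi_k\sim D$ i.i.d. Then for any positive sequence $(\alpha_k)$ with $L_1\alpha_k<2$ for all $k$, and any $T\ge 0$, $$\mathbb{E}_{\xi_{0\dots T}}\left[f\left(\frac{\sum_{k=0}^T\alpha_k(2-L_1\alpha_k)x_k}{\sum_{k=0}^T\alpha_k(2-L_1\alpha_k)}\right)-f^*\right]\le\frac{\|x_0-x^*\|^2+L_0^2\sum_{k=0}^T\alpha_k^2}{\sum_{k=0}^T\alpha_k(2-L_1\alpha_k)}.$$ In particular, if $L_0>0$ and the constant step size $\alpha_k=\|x_0-x^*\|/(L_0\sqrt{T+1})$ satisfies $L_1\alpha_k<2$, then $$\mathbb{E}_{\xi_{0\dots T}}\left[f\left(\frac{1}{T+1}\sum_{k=0}^Tx_k\right)-f^*\right]\le\frac{L_0\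|x_0-x^*\|}{\sqrt{T+1}}\cdot\frac{2}{2-L_1\alpha_k}.$$
   Context: $P_Q$ denotes orthogonal projection onto $Q$; $\partial f(x)=\{g: f(y)\ge f(x)+g^T(y-x)\ \forall y\in\mathbb{R}^d\}$. $D$ is a distribution from which the samples $\xi_k$ are drawn independently; $\mathbb{E}_{\xi_{0\dots T}}$ denotes expectation over $\xi_0,\dots,\xi_T$. *)

theory Defs
  imports "HOL-Analysis.Analysis" "HOL-Probability.Probability"
begin

definition lsc_ereal :: "('a::topological_space \<Rightarrow> ereal) \<Rightarrow> bool" where
  "lsc_ereal f \<longleftrightarrow> (\<forall>x. f x \<le> Liminf (at x) f)"

definition convex_ereal :: "('a::real_vector \<Rightarrow> ereal) \<Rightarrow> bool" where
  "convex_ereal f \<longleftrightarrow>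
     (\<forall>x y u. 0 < u \<and> u < 1 \<longrightarrow>
        f (u *\<^sub>R x + (1 - u) *\<^sub>R y) \<le> ereal u * f x + ereal (1 - u) * f y)"

definition edom :: "('a \<Rightarrow> ereal) \<Rightarrow> 'a set" where
  "edom f = {x. f x < \<infinity>}"

definition subdiff :: "('a::real_inner \<Rightarrow> ereal) \<Rightarrow> 'a \<Rightarrow> 'a set" where
  "subdiff f x = {g. \<forall>y. f y \<ge> f x + ereal (g \<bullet> (y - x))}"

fun sgd_iter :: "'a::euclidean_space set \<Rightarrow> ('a \<Rightarrow> 'b \<Rightarrow> 'a) \<Rightarrow> (nat \<Rightarrow> real) \<Rightarrow> 'a
                  \<Rightarrow> (nat \<Rightarrow> 'b) \<Rightarrow> nat \<Rightarrow> 'a" where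
  "sgd_iter Q g \<alpha> x0 \<xi> 0 = x0"
| "sgd_iter Q g \<alpha> x0 \<xi> (Suc k) =
     closest_point Q (sgd_iter Q g \<alpha> x0 \<xi> k - \<alpha> k *\<^sub>R g (sgd_iter Q g \<alpha> x0 \<xi> k) (\<xi> k))"

end

theory Submission
  imports Defs
begin

lemma sgd_iter_indep:
  "(\<forall>j<k. \<xi> j = \<xi>' j) \<Longrightarrow> sgd_iter Q g \<alpha> x0 \<xi> k = sgd_iter Q g \<alpha> x0 \<xi>' k"
  by (induction k) auto

lemma lsc_borel:
  fixes f :: "'a::euclidean_space \<Rightarrow> ereal"
  assumes "lsc_ereal f"
  shows "f \<in> borel_measurable borel"
proof (rule borel_measurableI_greater)
  fix y
  have "open {x. y < f x}"
  proof (rule open_subopen[THEN iffD2], intro ballI)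
    fix x assume "x \<in> {x. y < f x}"
    then have yx: "y < f x" by simp
    have "f x \<le> Liminf (at x) f" using assms unfolding lsc_ereal_def by blast
    with yx have "y < Liminf (at x) f" by (rule less_le_trans)
    then have "eventually (\<lambda>z. y < f z) (at x)"
      by (rule less_LiminfD)
    then have "eventually (\<lambda>z. y < f z) (nhds x)"
      using yx by (simp add: eventually_nhds_conv_at)
    then show "\<exists>T. open T \<and> x \<in> T \<and> T \<subseteq> {x. y < f x}"
      unfolding eventually_nhds by (metis mem_Collect_eq subsetI)
  qed
  then have "{x. y < f x} \<in> sets borel" by (rule borel_open)
  then show "{x \<in> space borel. y < f x} \<in> sets borel" by (simp only: space_borel UNIV_I simp_thms)
qed

locale sgd_set =
  fixes f :: "'a::euclidean_space \<Rightarrow> ereal"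
    and Q :: "'a set"
    and D :: "'b measure"
    and g :: "'a \<Rightarrow> 'b \<Rightarrow> 'a"
    and L0 L1 fstar :: real
    and xstar x0 :: 'a
  assumes x0_Q: "x0 \<in> Q" and proper: "\<forall>x. f x \<noteq> -\<infinity>"
    and lsc: "lsc_ereal f"
    and cvx: "convex_ereal f"
    and Q_ne: "Q \<noteq> {}" and Q_closed: "closed Q" and Q_convex: "convex Q"
    and Q_dom: "Q \<subseteq> edom f"
    and xstar_Q: "xstar \<in> Q"
    and xstar_min: "\<forall>y\<in>Q. f xstar \<le> f y"
    and fstar: "f xstar = ereal fstar"
    and D_prob: "prob_space D"
    and g_meas: "(\<lambda>(x, \<xi>). g x \<xi>) \<in> borel_measurable (borel \<Otimes>\<^sub>M D)"
    and g_int: "\<forall>x\<in>Q. integrable D (g x)"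
    and g_subgrad: "\<forall>x\<in>Q. (\<integral>\<xi>. g x \<xi> \<partial>D) \<in> subdiff f x"
    and L0_nn: "L0 \<ge> 0" and L1_nn: "L1 \<ge> 0"
    and g_growth: "\<forall>x\<in>Q. (\<integral>\<^sup>+\<xi>. ennreal ((norm (g x \<xi>))\<^sup>2) \<partial>D)
                         \<le> ennreal (L0\<^sup>2 + L1 * (real_of_ereal (f x) - fstar))"
begin

definition fr where "fr x = real_of_ereal (f x)"

lemma f_Q: "x \<in> Q \<Longrightarrow> f x = ereal (fr x)"
proof -
  assume "x \<in> Q"
  then have "f x < \<infinity>" using Q_dom unfolding edom_def by blast
  moreover have "f x \<noteq> -\<infinity>" using proper by blast
  ultimately show ?thesis unfolding fr_def by (cases "f x") auto
qed

lemma fr_ge: "x \<in> Q \<Longrightarrow> fstar \<le> fr x"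
proof -
  assume x: "x \<in> Q"
  then have "f xstar \<le> f x" using xstar_min by blast
  then show ?thesis using fstar f_Q[OF x] by simp
qed

lemma g_meas_x: "g x \<in> borel_measurable D"
  using measurable_compose[OF measurable_Pair1'[of x borel D] g_meas] by simp

lemma g_sq:
  assumes "x \<in> Q"
  shows "integrable D (\<lambda>\<xi>. (norm (g x \<xi>))\<^sup>2)"
    and "(\<integral>\<xi>. (norm (g x \<xi>))\<^sup>2 \<partial>D) \<le> L0\<^sup>2 + L1 * (fr x - fstar)"
proof -
  have m: "(\<lambda>\<xi>. (norm (g x \<xi>))\<^sup>2) \<in> borel_measurable D"
    using g_meas_x by measurable
  have b: "(\<integral>\<^sup>+\<xi>. ennreal ((norm (g x \<xi>))\<^sup>2) \<partial>D) \<le> ennreal (L0\<^sup>2 + L1 * (fr x - fstar))"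
    using g_growth assms unfolding fr_def by auto
  show i: "integrable D (\<lambda>\<xi>. (norm (g x \<xi>))\<^sup>2)"
    by (rule integrableI_bounded[OF m]) (use b in \<open>auto simp: top.not_eq_extremum intro: le_less_trans\<close>)
  have c: "0 \<le> L0\<^sup>2 + L1 * (fr x - fstar)"
    using fr_ge[OF assms] L1_nn by simp
  have "ennreal (\<integral>\<xi>. (norm (g x \<xi>))\<^sup>2 \<partial>D) \<le> ennreal (L0\<^sup>2 + L1 * (fr x - fstar))"
    using b by (subst nn_integral_eq_integral[OF i, symmetric]) auto
  then show "(\<integral>\<xi>. (norm (g x \<xi>))\<^sup>2 \<partial>D) \<le> L0\<^sup>2 + L1 * (fr x - fstar)"
    using c by (simp add: ennreal_le_iff)
qed

lemma proj_le:
  "norm (closest_point Q y - xstar) \<le> norm (y - xstar)"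
  using closest_point_lipschitz[OF Q_convex Q_closed Q_ne, of y xstar]
    closest_point_self[OF xstar_Q] by (simp add: dist_norm)

lemma step:
  assumes x: "x \<in> Q" and a: "0 \<le> a" "L1 * a \<le> 2"
  shows "(\<integral>\<^sup>+\<xi>. ennreal ((norm (closest_point Q (x - a *\<^sub>R g x \<xi>) - xstar))\<^sup>2) \<partial>D)
           + ennreal (a * (2 - L1 * a) * (fr x - fstar))
         \<le> ennreal ((norm (x - xstar))\<^sup>2 + a\<^sup>2 * L0\<^sup>2)"
proof -
  interpret D: prob_space D by (rule D_prob)
  define h where "h \<xi> = (norm (x - a *\<^sub>R g x \<xi> - xstar))\<^sup>2" for \<xi>
  have h_eq: "h \<xi> = (norm (x - xstar))\<^sup>2 - 2 * a * (g x \<xi> \<bullet> (x - xstar)) + a\<^sup>2 * (norm (g x \<xi>))\<^sup>2" for \<xi>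
    unfolding h_def power2_norm_eq_inner
    by (simp add: inner_diff_left inner_diff_right inner_commute algebra_simps power2_eq_square)
  have gi: "integrable D (g x)" using g_int x by auto
  have i1: "integrable D (\<lambda>\<xi>. g x \<xi> \<bullet> (x - xstar))"
    using gi by simp
  have i2: "integrable D (\<lambda>\<xi>. (norm (g x \<xi>))\<^sup>2)" using g_sq[OF x] by simp
  have hi: "integrable D h"
    unfolding h_eq using i1 i2 by auto
  have hint: "(\<integral>\<xi>. h \<xi> \<partial>D) = (norm (x - xstar))\<^sup>2 - 2 * a * ((\<integral>\<xi>. g x \<xi> \<partial>D) \<bullet> (x - xstar))
      + a\<^sup>2 * (\<integral>\<xi>. (norm (g x \<xi>))\<^sup>2 \<partial>D)"
    unfolding h_eq using i1 i2 gi by (simp add: D.prob_space)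
  have sg: "f xstar \<ge> f x + ereal ((\<integral>\<xi>. g x \<xi> \<partial>D) \<bullet> (xstar - x))"
    using g_subgrad x unfolding subdiff_def by auto
  then have sg': "fr x - fstar \<le> (\<integral>\<xi>. g x \<xi> \<partial>D) \<bullet> (x - xstar)"
    using f_Q[OF x] fstar by (simp add: inner_diff_right)
  have hb: "(\<integral>\<xi>. h \<xi> \<partial>D) + a * (2 - L1 * a) * (fr x - fstar) \<le> (norm (x - xstar))\<^sup>2 + a\<^sup>2 * L0\<^sup>2"
  proof -
    have "2 * a * (fr x - fstar) \<le> 2 * a * ((\<integral>\<xi>. g x \<xi> \<partial>D) \<bullet> (x - xstar))"
      using sg' a by (intro mult_left_mono) auto
    moreover have "a\<^sup>2 * (\<integral>\<xi>. (norm (g x \<xi>))\<^sup>2 \<partial>D) \<le> a\<^sup>2 * (L0\<^sup>2 + L1 * (fr x - fstar))"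
      using g_sq(2)[OF x] by (intro mult_left_mono) auto
    ultimately show ?thesis unfolding hint by (simp add: algebra_simps power2_eq_square)
  qed
  have c0: "0 \<le> a * (2 - L1 * a) * (fr x - fstar)"
    using a fr_ge[OF x] by simp
  have h0: "0 \<le> (\<integral>\<xi>. h \<xi> \<partial>D)" by (simp add: h_def)
  have "(\<integral>\<^sup>+\<xi>. ennreal ((norm (closest_point Q (x - a *\<^sub>R g x \<xi>) - xstar))\<^sup>2) \<partial>D)
        \<le> (\<integral>\<^sup>+\<xi>. ennreal (h \<xi>) \<partial>D)"
    unfolding h_def
    by (intro nn_integral_mono ennreal_leI power_mono proj_le) auto
  also have "\<dots> = ennreal (\<integral>\<xi>. h \<xi> \<partial>D)"
    by (rule nn_integral_eq_integral[OF hi]) (simp add: h_def)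
  finally have "(\<integral>\<^sup>+\<xi>. ennreal ((norm (closest_point Q (x - a *\<^sub>R g x \<xi>) - xstar))\<^sup>2) \<partial>D)
           + ennreal (a * (2 - L1 * a) * (fr x - fstar))
         \<le> ennreal (\<integral>\<xi>. h \<xi> \<partial>D) + ennreal (a * (2 - L1 * a) * (fr x - fstar))"
    by (rule add_right_mono)
  also have "\<dots> = ennreal ((\<integral>\<xi>. h \<xi> \<partial>D) + a * (2 - L1 * a) * (fr x - fstar))"
    using c0 h0 by (simp add: ennreal_plus)
  also have "\<dots> \<le> ennreal ((norm (x - xstar))\<^sup>2 + a\<^sup>2 * L0\<^sup>2)"
    using hb by (rule ennreal_leI)
  finally show ?thesis .
qed

lemma f_borel: "f \<in> borel_measurable borel"
  by (rule lsc_borel[OF lsc])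

lemma fr_borel: "fr \<in> borel_measurable borel"
  unfolding fr_def[abs_def] by (rule borel_measurable_real_of_ereal[OF f_borel])

lemma cp_borel: "closest_point Q \<in> borel_measurable borel"
  by (rule borel_measurable_continuous_onI[OF continuous_on_closest_point[OF Q_convex Q_closed Q_ne]])

lemma iter_meas:
  "k \<le> Suc T \<Longrightarrow> (\<lambda>\<xi>. sgd_iter Q g \<alpha> x0 \<xi> k) \<in> borel_measurable (PiM {..T} (\<lambda>_. D))"
proof (induction k)
  case 0
  then show ?case by simp
next
  case (Suc k)
  then have IH: "(\<lambda>\<xi>. sgd_iter Q g \<alpha> x0 \<xi> k) \<in> borel_measurable (PiM {..T} (\<lambda>_. D))" by simp
  have kT: "k \<in> {..T}" using Suc.prems by simp
  have gm: "(\<lambda>\<xi>. (\<lambda>(x, \<xi>). g x \<xi>) (sgd_iter Q g \<alpha> x0 \<xi> k, \<xi> k)) \<in> borel_measurable (PiM {..T} (\<lambda>_. D))"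
    by (rule measurable_compose[OF measurable_Pair[OF IH measurable_component_singleton[OF kT]] g_meas])
  have gm': "(\<lambda>\<xi>. g (sgd_iter Q g \<alpha> x0 \<xi> k) (\<xi> k)) \<in> borel_measurable (PiM {..T} (\<lambda>_. D))"
    using gm by (simp only: case_prod_conv)
  have "(\<lambda>\<xi>. sgd_iter Q g \<alpha> x0 \<xi> k - \<alpha> k *\<^sub>R g (sgd_iter Q g \<alpha> x0 \<xi> k) (\<xi> k)) \<in> borel_measurable (PiM {..T} (\<lambda>_. D))"
    by (rule borel_measurable_diff[OF IH borel_measurable_scaleR[OF measurable_const gm']]) simp
  from measurable_compose[OF this cp_borel] show ?case by (simp only: sgd_iter.simps)
qed

lemma iter_Q: "sgd_iter Q g \<alpha> x0 \<xi> k \<in> Q"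
proof (cases k)
  case 0
  then show ?thesis by (simp add: x0_Q)
next
  case (Suc m)
  then show ?thesis by (simp only: sgd_iter.simps closest_point_in_set[OF Q_closed Q_ne])
qed

lemma PS: "product_prob_space (\<lambda>_::nat. D)"
proof -
  interpret D: prob_space D by (rule D_prob)
  show ?thesis
    unfolding product_prob_space_def product_prob_space_axioms_def product_sigma_finite_def
    using D.sigma_finite_measure_axioms D_prob by simp
qed

lemma inner_bound:
  assumes z: "z \<in> Q" and a: "0 \<le> a" "L1 * a \<le> 2"
  shows "(\<integral>\<^sup>+y. ennreal ((norm (closest_point Q (z - a *\<^sub>R g z y) - xstar))\<^sup>2)
             + ennreal (a * (2 - L1 * a)) * ennreal (fr z - fstar) \<partial>D)
         \<le> ennreal ((norm (z - xstar))\<^sup>2 + a\<^sup>2 * L0\<^sup>2)"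
proof -
  interpret D: prob_space D by (rule D_prob)
  have gm[measurable]: "g z \<in> borel_measurable D" by (rule g_meas_x)
  have cpm[measurable]: "closest_point Q \<in> borel_measurable borel" by (rule cp_borel)
  have m: "(\<lambda>y. ennreal ((norm (closest_point Q (z - a *\<^sub>R g z y) - xstar))\<^sup>2)) \<in> borel_measurable D"
    by measurable
  have "(\<integral>\<^sup>+y. ennreal ((norm (closest_point Q (z - a *\<^sub>R g z y) - xstar))\<^sup>2)
             + ennreal (a * (2 - L1 * a)) * ennreal (fr z - fstar) \<partial>D)
       = (\<integral>\<^sup>+y. ennreal ((norm (closest_point Q (z - a *\<^sub>R g z y) - xstar))\<^sup>2) \<partial>D)
             + ennreal (a * (2 - L1 * a) * (fr z - fstar))"
    using a fr_ge[OF z]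
    by (subst nn_integral_add[OF m]) (auto simp: D.emeasure_space_1 ennreal_mult)
  also have "\<dots> \<le> ennreal ((norm (z - xstar))\<^sup>2 + a\<^sup>2 * L0\<^sup>2)"
    by (rule step[OF z a])
  finally show ?thesis .
qed

lemma pstep:
  assumes kT: "k \<le> T" and a: "0 \<le> \<alpha> k" "L1 * \<alpha> k \<le> 2"
  shows "(\<integral>\<^sup>+\<xi>. ennreal ((norm (sgd_iter Q g \<alpha> x0 \<xi> (Suc k) - xstar))\<^sup>2) \<partial>PiM {..T} (\<lambda>_. D))
       + ennreal (\<alpha> k * (2 - L1 * \<alpha> k)) * (\<integral>\<^sup>+\<xi>. ennreal (fr (sgd_iter Q g \<alpha> x0 \<xi> k) - fstar) \<partial>PiM {..T} (\<lambda>_. D))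
       \<le> (\<integral>\<^sup>+\<xi>. ennreal ((norm (sgd_iter Q g \<alpha> x0 \<xi> k - xstar))\<^sup>2) \<partial>PiM {..T} (\<lambda>_. D))
          + ennreal ((\<alpha> k)\<^sup>2 * L0\<^sup>2)"
proof -
  interpret PS: product_prob_space "\<lambda>_::nat. D" "{..T}" using PS by (simp add: product_prob_space_def)
  let ?P = "PiM {..T} (\<lambda>_. D)"
  let ?it = "sgd_iter Q g \<alpha> x0"
  define c where "c = ennreal (\<alpha> k * (2 - L1 * \<alpha> k))"
  define I where "I = {..T} - {k}"
  have I: "finite I" "k \<notin> I" "insert k I = {..T}" using kT by (auto simp: I_def)
  have m1[measurable]: "(\<lambda>\<xi>. ?it \<xi> k) \<in> borel_measurable ?P" using kT by (intro iter_meas) simp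
  have m2[measurable]: "(\<lambda>\<xi>. ?it \<xi> (Suc k)) \<in> borel_measurable ?P" using kT by (intro iter_meas) simp
  have frm[measurable]: "fr \<in> borel_measurable borel" by (rule fr_borel)
  have mA: "(\<lambda>\<xi>. ennreal ((norm (?it \<xi> (Suc k) - xstar))\<^sup>2) + c * ennreal (fr (?it \<xi> k) - fstar)) \<in> borel_measurable ?P"
    by measurable
  have mB: "(\<lambda>\<xi>. ennreal ((norm (?it \<xi> k - xstar))\<^sup>2 + (\<alpha> k)\<^sup>2 * L0\<^sup>2)) \<in> borel_measurable ?P"
    by measurable
  have upd: "?it (x(k := y)) k = ?it x k" for x y
    by (rule sgd_iter_indep) simp
  have upd2: "?it (x(k := y)) (Suc k) = closest_point Q (?it x k - \<alpha> k *\<^sub>R g (?it x k) y)" for x y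
    by (simp add: upd)
  have "(\<integral>\<^sup>+\<xi>. ennreal ((norm (?it \<xi> (Suc k) - xstar))\<^sup>2) \<partial>?P)
       + c * (\<integral>\<^sup>+\<xi>. ennreal (fr (?it \<xi> k) - fstar) \<partial>?P)
      = (\<integral>\<^sup>+\<xi>. ennreal ((norm (?it \<xi> (Suc k) - xstar))\<^sup>2) + c * ennreal (fr (?it \<xi> k) - fstar) \<partial>?P)"
    by (subst nn_integral_add) (auto simp del: sgd_iter.simps simp: nn_integral_cmult)
  also have "\<dots> = (\<integral>\<^sup>+x. (\<integral>\<^sup>+y. ennreal ((norm (?it (x(k := y)) (Suc k) - xstar))\<^sup>2)
        + c * ennreal (fr (?it (x(k := y)) k) - fstar) \<partial>D) \<partial>PiM I (\<lambda>_. D))"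
    using PS.product_nn_integral_insert[OF I(1,2) mA[folded I(3)]]
    unfolding I(3) by (simp only:)
  also have "\<dots> \<le> (\<integral>\<^sup>+x. ennreal ((norm (?it x k - xstar))\<^sup>2 + (\<alpha> k)\<^sup>2 * L0\<^sup>2) \<partial>PiM I (\<lambda>_. D))"
  proof (rule nn_integral_mono)
    fix x
    show "(\<integral>\<^sup>+y. ennreal ((norm (?it (x(k := y)) (Suc k) - xstar))\<^sup>2)
        + c * ennreal (fr (?it (x(k := y)) k) - fstar) \<partial>D)
        \<le> ennreal ((norm (?it x k - xstar))\<^sup>2 + (\<alpha> k)\<^sup>2 * L0\<^sup>2)"
      unfolding upd upd2 c_def by (rule inner_bound[OF iter_Q a])
  qed
  also have "\<dots> = (\<integral>\<^sup>+x. (\<integral>\<^sup>+y. ennreal ((norm (?it (x(k := y)) k - xstar))\<^sup>2 + (\<alpha> k)\<^sup>2 * L0\<^sup>2) \<partial>D) \<partial>PiM I (\<lambda>_. D))"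
    unfolding upd by (simp add: prob_space.emeasure_space_1[OF D_prob])
  also have "\<dots> = (\<integral>\<^sup>+\<xi>. ennreal ((norm (?it \<xi> k - xstar))\<^sup>2 + (\<alpha> k)\<^sup>2 * L0\<^sup>2) \<partial>?P)"
    using PS.product_nn_integral_insert[OF I(1,2) mB[folded I(3)]]
    unfolding I(3) by (simp only:)
  also have "\<dots> = (\<integral>\<^sup>+\<xi>. ennreal ((norm (?it \<xi> k - xstar))\<^sup>2) \<partial>?P) + ennreal ((\<alpha> k)\<^sup>2 * L0\<^sup>2)"
    by (subst ennreal_plus) (auto simp: nn_integral_add PS.P.emeasure_space_1)
  finally show ?thesis unfolding c_def .
qed

lemma telescope:
  assumes a: "\<And>k. 0 \<le> \<alpha> k" "\<And>k. L1 * \<alpha> k \<le> 2"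
  shows "n \<le> Suc T \<Longrightarrow>
    (\<integral>\<^sup>+\<xi>. ennreal ((norm (sgd_iter Q g \<alpha> x0 \<xi> n - xstar))\<^sup>2) \<partial>PiM {..T} (\<lambda>_. D))
    + (\<Sum>k<n. ennreal (\<alpha> k * (2 - L1 * \<alpha> k)) * (\<integral>\<^sup>+\<xi>. ennreal (fr (sgd_iter Q g \<alpha> x0 \<xi> k) - fstar) \<partial>PiM {..T} (\<lambda>_. D)))
    \<le> ennreal ((norm (x0 - xstar))\<^sup>2) + (\<Sum>k<n. ennreal ((\<alpha> k)\<^sup>2 * L0\<^sup>2))"
proof (induction n)
  case 0
  interpret PS: product_prob_space "\<lambda>_::nat. D" "{..T}" using PS by (simp add: product_prob_space_def)
  show ?case by (simp add: PS.P.emeasure_space_1)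
next
  case (Suc n)
  let ?P = "PiM {..T} (\<lambda>_. D)"
  define V where "V m = (\<integral>\<^sup>+\<xi>. ennreal ((norm (sgd_iter Q g \<alpha> x0 \<xi> m - xstar))\<^sup>2) \<partial>?P)" for m
  define F where "F m = ennreal (\<alpha> m * (2 - L1 * \<alpha> m)) * (\<integral>\<^sup>+\<xi>. ennreal (fr (sgd_iter Q g \<alpha> x0 \<xi> m) - fstar) \<partial>?P)" for m
  have IH: "V n + (\<Sum>k<n. F k) \<le> ennreal ((norm (x0 - xstar))\<^sup>2) + (\<Sum>k<n. ennreal ((\<alpha> k)\<^sup>2 * L0\<^sup>2))"
    using Suc by (simp add: V_def F_def)
  have st: "V (Suc n) + F n \<le> V n + ennreal ((\<alpha> n)\<^sup>2 * L0\<^sup>2)"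
    unfolding V_def F_def using Suc.prems a by (intro pstep) auto
  have "V (Suc n) + (\<Sum>k<Suc n. F k) = (V (Suc n) + F n) + (\<Sum>k<n. F k)"
    by (simp add: ac_simps)
  also have "\<dots> \<le> (V n + ennreal ((\<alpha> n)\<^sup>2 * L0\<^sup>2)) + (\<Sum>k<n. F k)"
    using st by (rule add_right_mono)
  also have "\<dots> = (V n + (\<Sum>k<n. F k)) + ennreal ((\<alpha> n)\<^sup>2 * L0\<^sup>2)"
    by (simp add: ac_simps)
  also have "\<dots> \<le> (ennreal ((norm (x0 - xstar))\<^sup>2) + (\<Sum>k<n. ennreal ((\<alpha> k)\<^sup>2 * L0\<^sup>2))) + ennreal ((\<alpha> n)\<^sup>2 * L0\<^sup>2)"
    using IH by (rule add_right_mono)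
  also have "\<dots> = ennreal ((norm (x0 - xstar))\<^sup>2) + (\<Sum>k<Suc n. ennreal ((\<alpha> k)\<^sup>2 * L0\<^sup>2))"
    by (simp add: ac_simps)
  finally show ?case by (simp add: V_def F_def)
qed

lemma fr_convex: "convex_on Q fr"
  unfolding convex_on_def
proof (intro conjI Q_convex ballI allI impI)
  fix x y assume xy: "x \<in> Q" "y \<in> Q"
  fix u v :: real assume uv: "0 \<le> u" "0 \<le> v" "u + v = 1"
  show "fr (u *\<^sub>R x + v *\<^sub>R y) \<le> u * fr x + v * fr y"
  proof (cases "u = 0 \<or> v = 0")
    case True
    then show ?thesis using uv by auto
  next
    case False
    then have u: "0 < u" "u < 1" and v: "v = 1 - u" using uv by auto
    have m: "u *\<^sub>R x + v *\<^sub>R y \<in> Q" using Q_convex xy uv unfolding convex_def by blast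
    have "f (u *\<^sub>R x + v *\<^sub>R y) \<le> ereal u * f x + ereal (1 - u) * f y"
      using cvx u unfolding convex_ereal_def v by blast
    then have "ereal (fr (u *\<^sub>R x + v *\<^sub>R y)) \<le> ereal (u * fr x + v * fr y)"
      using f_Q[OF xy(1)] f_Q[OF xy(2)] f_Q[OF m] v by simp
    then show ?thesis by simp
  qed
qed

lemma part1:
  assumes apos: "\<forall>k. 0 < \<alpha> k" and aL: "\<forall>k. L1 * \<alpha> k < 2"
  shows "(\<integral>\<^sup>+\<xi>. e2ennreal
              (f ((\<Sum>k\<le>T. (\<alpha> k * (2 - L1 * \<alpha> k)) *\<^sub>R sgd_iter Q g \<alpha> x0 \<xi> k)
                    /\<^sub>R (\<Sum>k\<le>T. \<alpha> k * (2 - L1 * \<alpha> k))) - ereal fstar)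
            \<partial>(PiM {..T} (\<lambda>_. D)))
          \<le> ennreal (((norm (x0 - xstar))\<^sup>2 + L0\<^sup>2 * (\<Sum>k\<le>T. (\<alpha> k)\<^sup>2))
                     / (\<Sum>k\<le>T. \<alpha> k * (2 - L1 * \<alpha> k)))"
proof -
  let ?P = "PiM {..T} (\<lambda>_. D)"
  let ?it = "sgd_iter Q g \<alpha> x0"
  define c where "c k = \<alpha> k * (2 - L1 * \<alpha> k)" for k
  define W where "W = (\<Sum>k\<le>T. c k)"
  have c0: "0 < c k" for k using apos aL by (simp add: c_def)
  have W0: "0 < W" unfolding W_def using c0 by (intro sum_pos) auto
  have pw: "e2ennreal (f ((\<Sum>k\<le>T. c k *\<^sub>R ?it \<xi> k) /\<^sub>R W) - ereal fstar)
      \<le> ennreal (1 / W) * (\<Sum>k\<le>T. ennreal (c k) * ennreal (fr (?it \<xi> k) - fstar))" for \<xi>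
  proof -
    define w where "w k = c k / W" for k
    have w0: "0 \<le> w k" for k using c0 W0 by (simp add: w_def less_imp_le)
    have w1: "(\<Sum>k\<le>T. w k) = 1" using W0 by (simp add: w_def W_def sum_divide_distrib[symmetric])
    have xb: "(\<Sum>k\<le>T. c k *\<^sub>R ?it \<xi> k) /\<^sub>R W = (\<Sum>k\<le>T. w k *\<^sub>R ?it \<xi> k)"
      by (simp add: w_def scaleR_sum_right divide_inverse_commute)
    have xQ: "(\<Sum>k\<le>T. w k *\<^sub>R ?it \<xi> k) \<in> Q"
      by (rule convex_sum[OF _ Q_convex w1]) (auto simp: w0 iter_Q)
    have J: "fr (\<Sum>k\<le>T. w k *\<^sub>R ?it \<xi> k) \<le> (\<Sum>k\<le>T. w k * fr (?it \<xi> k))"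
      by (rule convex_on_sum[OF _ _ fr_convex w1]) (auto simp: w0 iter_Q)
    have "e2ennreal (f ((\<Sum>k\<le>T. c k *\<^sub>R ?it \<xi> k) /\<^sub>R W) - ereal fstar)
        = ennreal (fr (\<Sum>k\<le>T. w k *\<^sub>R ?it \<xi> k) - fstar)"
      unfolding xb f_Q[OF xQ] by simp
    also have "\<dots> \<le> ennreal ((\<Sum>k\<le>T. w k * fr (?it \<xi> k)) - fstar)"
      using J by (intro ennreal_leI) simp
    also have "(\<Sum>k\<le>T. w k * fr (?it \<xi> k)) - fstar = (\<Sum>k\<le>T. w k * (fr (?it \<xi> k) - fstar))"
      using w1 by (simp add: right_diff_distrib sum_subtractf sum_distrib_right[symmetric])
    also have "\<dots> = (1 / W) * (\<Sum>k\<le>T. c k * (fr (?it \<xi> k) - fstar))"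
      by (simp add: w_def sum_distrib_left)
    also have "ennreal \<dots> = ennreal (1 / W) * (\<Sum>k\<le>T. ennreal (c k) * ennreal (fr (?it \<xi> k) - fstar))"
    proof -
      have d0: "0 \<le> fr (?it \<xi> k) - fstar" for k using fr_ge[OF iter_Q] by simp
      have c0': "0 \<le> c k" for k using c0[of k] by simp
      have s0: "0 \<le> (\<Sum>k\<le>T. c k * (fr (?it \<xi> k) - fstar))"
        using d0 c0' by (intro sum_nonneg mult_nonneg_nonneg) auto
      have "ennreal (\<Sum>k\<le>T. c k * (fr (?it \<xi> k) - fstar))
          = (\<Sum>k\<le>T. ennreal (c k * (fr (?it \<xi> k) - fstar)))"
        using d0 c0' by (intro sum_ennreal[symmetric] mult_nonneg_nonneg) auto
      also have "\<dots> = (\<Sum>k\<le>T. ennreal (c k) * ennreal (fr (?it \<xi> k) - fstar))"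
        using d0 c0' by (intro sum.cong refl ennreal_mult)
      finally show ?thesis
        using W0 s0 by (subst ennreal_mult) auto
    qed
    finally show ?thesis .
  qed
  have m[measurable]: "(\<lambda>\<xi>. ?it \<xi> k) \<in> borel_measurable ?P" if "k \<le> T" for k
    using that by (intro iter_meas) simp
  have frm[measurable]: "fr \<in> borel_measurable borel" by (rule fr_borel)
  have "(\<integral>\<^sup>+\<xi>. e2ennreal (f ((\<Sum>k\<le>T. c k *\<^sub>R ?it \<xi> k) /\<^sub>R W) - ereal fstar) \<partial>?P)
      \<le> (\<integral>\<^sup>+\<xi>. ennreal (1 / W) * (\<Sum>k\<le>T. ennreal (c k) * ennreal (fr (?it \<xi> k) - fstar)) \<partial>?P)"
    by (intro nn_integral_mono pw)
  also have "\<dots> = ennreal (1 / W) * (\<Sum>k\<le>T. ennreal (c k) * (\<integral>\<^sup>+\<xi>. ennreal (fr (?it \<xi> k) - fstar) \<partial>?P))"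
  proof -
    have mk: "(\<lambda>\<xi>. ennreal (c k) * ennreal (fr (?it \<xi> k) - fstar)) \<in> borel_measurable ?P"
      if "k \<in> {..T}" for k
    proof -
      have [measurable]: "(\<lambda>\<xi>. ?it \<xi> k) \<in> borel_measurable ?P" using that by (intro iter_meas) simp
      show ?thesis by measurable
    qed
    have mk2: "(\<lambda>\<xi>. ennreal (fr (?it \<xi> k) - fstar)) \<in> borel_measurable ?P"
      if "k \<in> {..T}" for k
    proof -
      have [measurable]: "(\<lambda>\<xi>. ?it \<xi> k) \<in> borel_measurable ?P" using that by (intro iter_meas) simp
      show ?thesis by measurable
    qed
    have ms: "(\<lambda>\<xi>. \<Sum>k\<le>T. ennreal (c k) * ennreal (fr (?it \<xi> k) - fstar)) \<in> borel_measurable ?P"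
      using mk by (rule borel_measurable_sum)
    have "(\<integral>\<^sup>+\<xi>. (\<Sum>k\<le>T. ennreal (c k) * ennreal (fr (?it \<xi> k) - fstar)) \<partial>?P)
        = (\<Sum>k\<le>T. (\<integral>\<^sup>+\<xi>. ennreal (c k) * ennreal (fr (?it \<xi> k) - fstar) \<partial>?P))"
      by (rule nn_integral_sum[OF mk])
    also have "\<dots> = (\<Sum>k\<le>T. ennreal (c k) * (\<integral>\<^sup>+\<xi>. ennreal (fr (?it \<xi> k) - fstar) \<partial>?P))"
      by (intro sum.cong refl nn_integral_cmult mk2)
    finally show ?thesis
      by (subst nn_integral_cmult[OF ms]) simp
  qed
  also have "\<dots> \<le> ennreal (1 / W) * (ennreal ((norm (x0 - xstar))\<^sup>2) + (\<Sum>k\<le>T. ennreal ((\<alpha> k)\<^sup>2 * L0\<^sup>2)))"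
  proof (rule mult_left_mono)
    have "(\<Sum>k<Suc T. ennreal (c k) * (\<integral>\<^sup>+\<xi>. ennreal (fr (?it \<xi> k) - fstar) \<partial>?P))
        \<le> (\<integral>\<^sup>+\<xi>. ennreal ((norm (?it \<xi> (Suc T) - xstar))\<^sup>2) \<partial>?P)
          + (\<Sum>k<Suc T. ennreal (c k) * (\<integral>\<^sup>+\<xi>. ennreal (fr (?it \<xi> k) - fstar) \<partial>?P))"
      by simp
    also have "\<dots> \<le> ennreal ((norm (x0 - xstar))\<^sup>2) + (\<Sum>k<Suc T. ennreal ((\<alpha> k)\<^sup>2 * L0\<^sup>2))"
      unfolding c_def using apos aL by (intro telescope) (auto simp: less_imp_le)
    finally show "(\<Sum>k\<le>T. ennreal (c k) * (\<integral>\<^sup>+\<xi>. ennreal (fr (?it \<xi> k) - fstar) \<partial>?P))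
        \<le> ennreal ((norm (x0 - xstar))\<^sup>2) + (\<Sum>k\<le>T. ennreal ((\<alpha> k)\<^sup>2 * L0\<^sup>2))"
      by (simp add: lessThan_Suc_atMost)
  qed simp
  also have "\<dots> = ennreal (((norm (x0 - xstar))\<^sup>2 + L0\<^sup>2 * (\<Sum>k\<le>T. (\<alpha> k)\<^sup>2)) / W)"
  proof -
    have "(\<Sum>k\<le>T. ennreal ((\<alpha> k)\<^sup>2 * L0\<^sup>2)) = ennreal (\<Sum>k\<le>T. (\<alpha> k)\<^sup>2 * L0\<^sup>2)"
      by (rule sum_ennreal) simp
    also have "(\<Sum>k\<le>T. (\<alpha> k)\<^sup>2 * L0\<^sup>2) = L0\<^sup>2 * (\<Sum>k\<le>T. (\<alpha> k)\<^sup>2)"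
      by (simp add: sum_distrib_left mult.commute)
    finally have e1: "ennreal ((norm (x0 - xstar))\<^sup>2) + (\<Sum>k\<le>T. ennreal ((\<alpha> k)\<^sup>2 * L0\<^sup>2))
        = ennreal ((norm (x0 - xstar))\<^sup>2 + L0\<^sup>2 * (\<Sum>k\<le>T. (\<alpha> k)\<^sup>2))"
      by (simp add: ennreal_plus sum_nonneg)
    have "ennreal (1 / W) * ennreal ((norm (x0 - xstar))\<^sup>2 + L0\<^sup>2 * (\<Sum>k\<le>T. (\<alpha> k)\<^sup>2))
       = ennreal (1 / W * ((norm (x0 - xstar))\<^sup>2 + L0\<^sup>2 * (\<Sum>k\<le>T. (\<alpha> k)\<^sup>2)))"
      using W0 by (intro ennreal_mult[symmetric]) (auto intro!: add_nonneg_nonneg mult_nonneg_nonneg sum_nonneg)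
    then show ?thesis unfolding e1 by simp
  qed
  finally show ?thesis by (simp add: c_def W_def)
qed

end

theorem theorem1p6:
  fixes f :: "'a::euclidean_space \<Rightarrow> ereal"
    and Q :: "'a set"
    and D :: "'b measure"
    and g :: "'a \<Rightarrow> 'b \<Rightarrow> 'a"
    and L0 L1 fstar :: real
    and xstar x0 :: 'a
  assumes proper: "\<forall>x. f x \<noteq> -\<infinity>"
    and lsc: "lsc_ereal f"
    and cvx: "convex_ereal f"
    and Q_ne: "Q \<noteq> {}" and Q_closed: "closed Q" and Q_convex: "convex Q"
    and Q_dom: "Q \<subseteq> edom f"
    and xstar_Q: "xstar \<in> Q"
    and xstar_min: "\<forall>y\<in>Q. f xstar \<le> f y"
    and fstar: "f xstar = ereal fstar"
    and x0_Q: "x0 \<in> Q"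
    and D_prob: "prob_space D"
    and g_meas: "(\<lambda>(x, \<xi>). g x \<xi>) \<in> borel_measurable (borel \<Otimes>\<^sub>M D)"
    and g_int: "\<forall>x\<in>Q. integrable D (g x)"
    and g_subgrad: "\<forall>x\<in>Q. (\<integral>\<xi>. g x \<xi> \<partial>D) \<in> subdiff f x"
    and L0_nn: "L0 \<ge> 0" and L1_nn: "L1 \<ge> 0"
    and g_growth: "\<forall>x\<in>Q. (\<integral>\<^sup>+\<xi>. ennreal ((norm (g x \<xi>))\<^sup>2) \<partial>D)
                         \<le> ennreal (L0\<^sup>2 + L1 * (real_of_ereal (f x) - fstar))"
  shows
    "(\<forall>\<alpha> :: nat \<Rightarrow> real. (\<forall>k. 0 < \<alpha> k) \<and> (\<forall>k. L1 * \<alpha> k < 2) \<longrightarrow>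
       (\<forall>T::nat.
          (\<integral>\<^sup>+\<xi>. e2ennreal
              (f ((\<Sum>k\<le>T. (\<alpha> k * (2 - L1 * \<alpha> k)) *\<^sub>R sgd_iter Q g \<alpha> x0 \<xi> k)
                    /\<^sub>R (\<Sum>k\<le>T. \<alpha> k * (2 - L1 * \<alpha> k))) - ereal fstar)
            \<partial>(PiM {..T} (\<lambda>_. D)))
          \<le> ennreal (((norm (x0 - xstar))\<^sup>2 + L0\<^sup>2 * (\<Sum>k\<le>T. (\<alpha> k)\<^sup>2))
                     / (\<Sum>k\<le>T. \<alpha> k * (2 - L1 * \<alpha> k))))) \<and>
     (\<forall>T::nat. L0 > 0 \<and> L1 * (norm (x0 - xstar) / (L0 * sqrt (real T + 1))) < 2 \<longrightarrow>
        (let a = norm (x0 - xstar) / (L0 * sqrt (real T + 1)) in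
          (\<integral>\<^sup>+\<xi>. e2ennreal
              (f ((\<Sum>k\<le>T. sgd_iter Q g (\<lambda>_. a) x0 \<xi> k) /\<^sub>R (real T + 1)) - ereal fstar)
            \<partial>(PiM {..T} (\<lambda>_. D)))
          \<le> ennreal (L0 * norm (x0 - xstar) / sqrt (real T + 1) * (2 / (2 - L1 * a)))))"
proof -
  interpret S: sgd_set f Q D g L0 L1 fstar xstar x0
    unfolding sgd_set_def using assms by blast
  have P1: "\<forall>\<alpha> :: nat \<Rightarrow> real. (\<forall>k. 0 < \<alpha> k) \<and> (\<forall>k. L1 * \<alpha> k < 2) \<longrightarrow>
       (\<forall>T::nat.
          (\<integral>\<^sup>+\<xi>. e2ennreal
              (f ((\<Sum>k\<le>T. (\<alpha> k * (2 - L1 * \<alpha> k)) *\<^sub>R sgd_iter Q g \<alpha> x0 \<xi> k)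
                    /\<^sub>R (\<Sum>k\<le>T. \<alpha> k * (2 - L1 * \<alpha> k))) - ereal fstar)
            \<partial>(PiM {..T} (\<lambda>_. D)))
          \<le> ennreal (((norm (x0 - xstar))\<^sup>2 + L0\<^sup>2 * (\<Sum>k\<le>T. (\<alpha> k)\<^sup>2))
                     / (\<Sum>k\<le>T. \<alpha> k * (2 - L1 * \<alpha> k))))"
    using S.part1 by blast
  have P2: "(let a = norm (x0 - xstar) / (L0 * sqrt (real T + 1)) in
          (\<integral>\<^sup>+\<xi>. e2ennreal
              (f ((\<Sum>k\<le>T. sgd_iter Q g (\<lambda>_. a) x0 \<xi> k) /\<^sub>R (real T + 1)) - ereal fstar)
            \<partial>(PiM {..T} (\<lambda>_. D)))
          \<le> ennreal (L0 * norm (x0 - xstar) / sqrt (real T + 1) * (2 / (2 - L1 * a))))"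
    if hT: "L0 > 0 \<and> L1 * (norm (x0 - xstar) / (L0 * sqrt (real T + 1))) < 2" for T
  proof -
    define R where "R = norm (x0 - xstar)"
    define sq where "sq = sqrt (real T + 1)"
    define a where "a = R / (L0 * sq)"
    have L0p: "0 < L0" and aL: "L1 * a < 2" using hT by (auto simp: a_def R_def sq_def)
    have sqp: "0 < sq" by (simp add: sq_def)
    have sq2: "sq\<^sup>2 = real T + 1" by (simp add: sq_def)
    have Ra: "R = a * L0 * sq" using L0p sqp by (simp add: a_def)
    show ?thesis
    proof (cases "R = 0")
      case True
      then have x0s: "x0 = xstar" by (simp add: R_def)
      have a0: "a = 0" using True by (simp add: a_def)
      have it: "sgd_iter Q g (\<lambda>_. a) x0 \<xi> k = x0" for \<xi> k
        by (induction k) (simp_all add: a0 closest_point_self[OF x0_Q])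
      have avg: "(\<Sum>k\<le>T. sgd_iter Q g (\<lambda>_. a) x0 \<xi> k) /\<^sub>R (real T + 1) = x0" for \<xi>
        unfolding it sum_constant_scaleR by (simp add: add.commute)
      show ?thesis
        unfolding Let_def a_def[unfolded R_def sq_def, symmetric] avg using fstar x0s
        by (simp add: zero_ereal_def[symmetric])
    next
      case False
      then have Rp: "0 < R" by (simp add: R_def)
      then have ap: "0 < a" using L0p sqp by (simp add: a_def)
      define c where "c = a * (2 - L1 * a)"
      have cp: "0 < c" using ap aL by (simp add: c_def)
      have M: "(\<integral>\<^sup>+\<xi>. e2ennreal
              (f ((\<Sum>k\<le>T. c *\<^sub>R sgd_iter Q g (\<lambda>_. a) x0 \<xi> k)
                    /\<^sub>R (\<Sum>k\<le>T. c)) - ereal fstar)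
            \<partial>(PiM {..T} (\<lambda>_. D)))
          \<le> ennreal ((R\<^sup>2 + L0\<^sup>2 * (\<Sum>k\<le>T. a\<^sup>2)) / (\<Sum>k\<le>T. c))"
      proof -
        have H: "(\<forall>k. 0 < (\<lambda>_. a) k) \<and> (\<forall>k. L1 * (\<lambda>_. a) k < 2)" using ap aL by simp
        note M0 = spec[OF mp[OF spec[OF P1, of "\<lambda>_. a"] H], of T]
        show ?thesis using M0 unfolding c_def R_def by (simp only:)
      qed
      have avg: "(\<Sum>k\<le>T. c *\<^sub>R sgd_iter Q g (\<lambda>_. a) x0 \<xi> k) /\<^sub>R (\<Sum>k\<le>T. c)
          = (\<Sum>k\<le>T. sgd_iter Q g (\<lambda>_. a) x0 \<xi> k) /\<^sub>R (real T + 1)" for \<xi>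
        using cp by (simp add: scaleR_sum_right[symmetric] add.commute)
      have rhs: "(R\<^sup>2 + L0\<^sup>2 * (\<Sum>k\<le>T. a\<^sup>2)) / (\<Sum>k\<le>T. c)
          = L0 * R / sq * (2 / (2 - L1 * a))"
      proof -
        have "(R\<^sup>2 + L0\<^sup>2 * (\<Sum>k\<le>T. a\<^sup>2)) / (\<Sum>k\<le>T. c)
            = (R\<^sup>2 + L0\<^sup>2 * (sq\<^sup>2 * a\<^sup>2)) / (sq\<^sup>2 * c)"
          by (simp add: sq2 add.commute)
        also have "\<dots> = L0 * R / sq * (2 / (2 - L1 * a))"
          using sqp ap aL L0p unfolding Ra c_def
          by (simp add: field_simps power2_eq_square)
        finally show ?thesis .
      qed
      show ?thesis
        using M unfolding Let_def avg rhs
        by (simp add: a_def R_def sq_def)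
    qed
  qed
  show ?thesis using P1 P2 by blast
qed

end
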